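(* The linear map $F(L)\to F(A)$ sending the class of $a\otimes b$ ($a,b\in L$) to $\operatorname{tr}(ab)$ is injective.
   Context: $A=\mathbb{R}\langle x,y\rangle$ is the free associative algebra and $L\subset A$ the free Lie algebra on $x,y$ (smallest Lie subalgebra of $(A,[a,b]=ab-ba)$ containing $x,y$). $F(A)$ is the quotient of $A\otimes A$ by the span of $a\otimes b-b\otimes a$ and $a\otimes bc-ab\otimes c$, identified with $A/\operatorname{span}\{ab-ba\}$ via $a\otimes b\mapsto \operatorname{tr}(ab)$, where $\operatorname{tr}$ denotes the projection $A\to A/\operatorname{span}\{ab-ba\}$. $F(L)$ is the quotient of $L\otimes L$ by the span of $a\otimes b-b\otimes a$ and $a\otimes[b,c]-[a,b]\otimes c$ ($a,b,c\in L$). *)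

theory Defs
  imports Complex_Main "HOL-Library.Function_Algebras"
begin

text \<open>The free associative algebra A = R<x,y>: finitely supported real functions on
  words over the alphabet bool (False stands for x, True for y).\<close>

type_synonym ncpoly = "bool list \<Rightarrow> real"
type_synonym nctensor = "bool list \<times> bool list \<Rightarrow> real"

definition fscale :: "real \<Rightarrow> ('a \<Rightarrow> real) \<Rightarrow> ('a \<Rightarrow> real)" where
  "fscale c f = (\<lambda>w. c * f w)"

abbreviation rspan :: "('a \<Rightarrow> real) set \<Rightarrow> ('a \<Rightarrow> real) set" where
  "rspan S \<equiv> module.span fscale S"

definition Aset :: "ncpoly set" where
  "Aset = {f. finite {w. f w \<noteq> 0}}"

definition ncmul :: "ncpoly \<Rightarrow> ncpoly \<Rightarrow> ncpoly" where
  "ncmul f g = (\<lambda>w. \<Sum>i\<in>{0..length w}. f (take i w) * g (drop i w))"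

definition gen :: "bool \<Rightarrow> ncpoly" where
  "gen b = (\<lambda>w. if w = [b] then 1 else 0)"

definition lie_br :: "ncpoly \<Rightarrow> ncpoly \<Rightarrow> ncpoly" where
  "lie_br a b = ncmul a b - ncmul b a"

inductive_set FreeLie :: "ncpoly set" where
  gen: "gen b \<in> FreeLie"
| add: "a \<in> FreeLie \<Longrightarrow> b \<in> FreeLie \<Longrightarrow> a + b \<in> FreeLie"
| scale: "a \<in> FreeLie \<Longrightarrow> fscale c a \<in> FreeLie"
| br: "a \<in> FreeLie \<Longrightarrow> b \<in> FreeLie \<Longrightarrow> lie_br a b \<in> FreeLie"

text \<open>A \<otimes> A realised as (finitely supported) functions on pairs of words.\<close>
definition tensor :: "ncpoly \<Rightarrow> ncpoly \<Rightarrow> nctensor" where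
  "tensor a b = (\<lambda>(u, v). a u * b v)"

definition mulmap :: "nctensor \<Rightarrow> ncpoly" where
  "mulmap t = (\<lambda>w. \<Sum>i\<in>{0..length w}. t (take i w, drop i w))"

text \<open>L \<otimes> L as a subspace of A \<otimes> A, and the relations defining F(L).\<close>
definition LtensL :: "nctensor set" where
  "LtensL = rspan {tensor a b | a b. a \<in> FreeLie \<and> b \<in> FreeLie}"

definition FL_rel :: "nctensor set" where
  "FL_rel = rspan ({tensor a b - tensor b a | a b. a \<in> FreeLie \<and> b \<in> FreeLie}
     \<union> {tensor a (lie_br b c) - tensor (lie_br a b) c | a b c.
          a \<in> FreeLie \<and> b \<in> FreeLie \<and> c \<in> FreeLie})"

text \<open>The commutator subspace [A,A]; tr is the projection A \<rightarrow> A/[A,A].\<close>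
definition commA :: "ncpoly set" where
  "commA = rspan {lie_br p q | p q. p \<in> Aset \<and> q \<in> Aset}"

end

theory Submission
  imports Defs
begin


lemma sum_fun_app: "(sum f S) z = sum (\<lambda>i. f i z) S"
  by (induct S rule: infinite_finite_induct) auto

lemma diff_fun_app: "(f - g) z = f z - g z" by simp
lemma neg_fun_app: "(- f) z = - f z" by simp

lemma fscale_app: "fscale c f z = c * f z" by (simp add: fscale_def)

lemma fmod: "module (fscale :: real \<Rightarrow> ('a \<Rightarrow> real) \<Rightarrow> ('a \<Rightarrow> real))"
  by unfold_locales (auto simp: fscale_def fun_eq_iff algebra_simps)



definition supp :: "('a \<Rightarrow> real) \<Rightarrow> 'a set" where
  "supp p = {w. p w \<noteq> 0}"

definition delta :: "bool list \<Rightarrow> ncpoly" where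
  "delta w = (\<lambda>z. if z = w then 1 else 0)"

definition lin :: "(bool list \<Rightarrow> 'b \<Rightarrow> real) \<Rightarrow> ncpoly \<Rightarrow> 'b \<Rightarrow> real" where
  "lin f p = (\<Sum>w\<in>supp p. fscale (p w) (f w))"

definition linop :: "(('a \<Rightarrow> real) \<Rightarrow> ('b \<Rightarrow> real)) \<Rightarrow> bool" where
  "linop T \<longleftrightarrow> (\<forall>x y. T (x + y) = T x + T y) \<and> (\<forall>r x. T (fscale r x) = fscale r (T x))"

definition linA :: "(ncpoly \<Rightarrow> ('b \<Rightarrow> real)) \<Rightarrow> bool" where
  "linA T \<longleftrightarrow> (\<forall>x\<in>Aset. \<forall>y\<in>Aset. T (x + y) = T x + T y) \<and> (\<forall>r. \<forall>x\<in>Aset. T (fscale r x) = fscale r (T x))"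

lemma Aset_iff: "p \<in> Aset \<longleftrightarrow> finite (supp p)"
  by (simp add: Aset_def supp_def)

lemma supp_add: "supp (p + q) \<subseteq> supp p \<union> supp q"
  by (auto simp: supp_def)

lemma Aset_add[intro]: "p \<in> Aset \<Longrightarrow> q \<in> Aset \<Longrightarrow> p + q \<in> Aset"
  unfolding Aset_iff by (meson finite_UnI finite_subset supp_add)

lemma Aset_scale[intro]: "p \<in> Aset \<Longrightarrow> fscale r p \<in> Aset"
  unfolding Aset_iff by (rule finite_subset[of _ "supp p"]) (auto simp: supp_def fscale_app)

lemma Aset_neg[intro]: "p \<in> Aset \<Longrightarrow> - p \<in> Aset"
  unfolding Aset_iff by (simp add: supp_def)

lemma Aset_diff[intro]: "p \<in> Aset \<Longrightarrow> q \<in> Aset \<Longrightarrow> p - q \<in> Aset"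
  using Aset_add[of p "-q"] Aset_neg[of q] by simp

lemma Aset_zero[intro,simp]: "0 \<in> Aset"
  by (simp add: Aset_def)

lemma Aset_delta[intro,simp]: "delta w \<in> Aset"
  by (simp add: Aset_def delta_def)

lemma Aset_sum[intro]: "(\<And>i. i \<in> S \<Longrightarrow> f i \<in> Aset) \<Longrightarrow> sum f S \<in> Aset"
  by (induct S rule: infinite_finite_induct) auto

lemma lin_apply: "lin f p z = (\<Sum>w\<in>supp p. p w * f w z)"
  by (simp add: lin_def sum_fun_app fscale_app)

lemma lin_superset:
  assumes "finite S" "supp p \<subseteq> S"
  shows "lin f p = (\<Sum>w\<in>S. fscale (p w) (f w))"
  unfolding lin_def
  by (rule sum.mono_neutral_left) (use assms in \<open>auto simp: supp_def fscale_def fun_eq_iff\<close>)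

lemma Aset_lin[intro]: "(\<And>w. w \<in> supp p \<Longrightarrow> f w \<in> Aset) \<Longrightarrow> lin f p \<in> Aset"
  unfolding lin_def by (intro Aset_sum Aset_scale) auto

lemma lin_add:
  assumes "p \<in> Aset" "q \<in> Aset"
  shows "lin f (p + q) = lin f p + lin f q"
proof -
  let ?S = "supp p \<union> supp q"
  have f: "finite ?S" using assms by (simp add: Aset_iff)
  have "lin f (p + q) = (\<Sum>w\<in>?S. fscale ((p+q) w) (f w))"
    by (rule lin_superset[OF f]) (rule supp_add)
  also have "\<dots> = (\<Sum>w\<in>?S. fscale (p w) (f w)) + (\<Sum>w\<in>?S. fscale (q w) (f w))"
    unfolding sum.distrib[symmetric] by (rule sum.cong) (auto simp: fscale_def fun_eq_iff algebra_simps)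
  also have "\<dots> = lin f p + lin f q"
    using lin_superset[OF f, of p f] lin_superset[OF f, of q f] by auto
  finally show ?thesis .
qed

lemma lin_scale: "lin f (fscale r p) = fscale r (lin f p)"
proof (cases "r = 0")
  case True then show ?thesis by (simp add: lin_def supp_def fscale_def fun_eq_iff)
next
  case False
  then have "supp (fscale r p) = supp p" by (auto simp: supp_def fscale_app)
  then show ?thesis using False
    by (simp add: lin_apply fun_eq_iff sum_distrib_left algebra_simps fscale_app)
qed

lemma lin_zero[simp]: "lin f 0 = 0"
  by (simp add: lin_def supp_def)

lemma lin_neg: "lin f (- p) = - lin f p"
proof -
  have e: "- p = fscale (-1) p" by (simp add: fun_eq_iff fscale_app)
  have "lin f (- p) = fscale (-1) (lin f p)" unfolding e by (rule lin_scale)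
  then show ?thesis by (simp add: fun_eq_iff fscale_app)
qed

lemma lin_diff: "p \<in> Aset \<Longrightarrow> q \<in> Aset \<Longrightarrow> lin f (p - q) = lin f p - lin f q"
  using lin_add[of p "-q" f] lin_neg[of f q] by auto

lemma lin_delta[simp]: "lin f (delta w) = f w"
proof -
  have "supp (delta w) = {w}" by (auto simp: supp_def delta_def)
  then show ?thesis by (simp add: lin_def delta_def fscale_def)
qed

lemma lin_cong: "(\<And>w. w \<in> supp p \<Longrightarrow> f w = g w) \<Longrightarrow> lin f p = lin g p"
  unfolding lin_def by (rule sum.cong) auto

lemma lin_fadd: "lin (\<lambda>w. f w + g w) p = lin f p + lin g p"
  by (simp add: lin_apply fun_eq_iff sum.distrib algebra_simps)

lemma lin_fdiff: "lin (\<lambda>w. f w - g w) p = lin f p - lin g p"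
  by (simp add: lin_apply fun_eq_iff sum_subtractf algebra_simps)

lemma lin_fscale: "lin (\<lambda>w. fscale r (f w)) p = fscale r (lin f p)"
  by (simp add: lin_apply fun_eq_iff sum_distrib_left algebra_simps fscale_app)

lemma lin_fzero[simp]: "lin (\<lambda>w. 0) p = 0"
  by (simp add: lin_apply fun_eq_iff)

lemma lin_fsum: "lin (\<lambda>w. \<Sum>j\<in>J. g j w) p = (\<Sum>j\<in>J. lin (g j) p)"
  by (simp add: lin_apply fun_eq_iff sum_fun_app sum_distrib_left sum.swap[of _ J])

lemma lin_fsum_dep: "lin (\<lambda>w. \<Sum>j\<in>J w. g j w) p = lin (\<lambda>w. \<Sum>j\<in>J w. g j w) p"
  by simp

lemma lin_delta_id: "p \<in> Aset \<Longrightarrow> lin delta p = p"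
proof (rule ext)
  fix z assume "p \<in> Aset"
  have "lin delta p z = (\<Sum>w\<in>supp p. if w = z then p w else 0)"
    by (simp add: lin_apply delta_def) (rule sum.cong, auto)
  also have "\<dots> = p z" using \<open>p \<in> Aset\<close>
    by (simp add: Aset_iff) (auto simp: supp_def)
  finally show "lin delta p z = p z" .
qed

lemma lin_swap:
  "lin (\<lambda>u. lin (\<lambda>v. G u v) q) p = lin (\<lambda>v. lin (\<lambda>u. G u v) p) q"
proof (rule ext)
  fix z
  have "lin (\<lambda>u. lin (\<lambda>v. G u v) q) p z = (\<Sum>u\<in>supp p. \<Sum>v\<in>supp q. p u * (q v * G u v z))"
    by (simp add: lin_apply sum_distrib_left)
  also have "\<dots> = (\<Sum>v\<in>supp q. \<Sum>u\<in>supp p. q v * (p u * G u v z))"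
    by (subst sum.swap) (simp add: algebra_simps)
  also have "\<dots> = lin (\<lambda>v. lin (\<lambda>u. G u v) p) q z"
    by (simp add: lin_apply sum_distrib_left)
  finally show "lin (\<lambda>u. lin (\<lambda>v. G u v) q) p z = lin (\<lambda>v. lin (\<lambda>u. G u v) p) q z" .
qed

lemma linop_add: "linop T \<Longrightarrow> T (x + y) = T x + T y"
  by (simp add: linop_def)
lemma linop_scale: "linop T \<Longrightarrow> T (fscale r x) = fscale r (T x)"
  by (simp add: linop_def)
lemma fscale_zero_left: "fscale 0 x = 0"
  by (simp add: fscale_def fun_eq_iff)
lemma linop_zero: "linop T \<Longrightarrow> T 0 = 0"
  using linop_scale[of T 0 0] by (simp add: fscale_zero_left)
lemma linop_neg: "linop T \<Longrightarrow> T (- x) = - T x"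
proof -
  assume T: "linop T"
  have e: "- x = fscale (-1) x" by (simp add: fun_eq_iff fscale_app)
  have "T (- x) = fscale (-1) (T x)" unfolding e by (rule linop_scale[OF T])
  then show ?thesis by (simp add: fun_eq_iff fscale_app)
qed
lemma linop_diff: "linop T \<Longrightarrow> T (x - y) = T x - T y"
  using linop_add[of T x "-y"] linop_neg[of T y] by simp
lemma linop_sum: "linop T \<Longrightarrow> T (sum f S) = (\<Sum>i\<in>S. T (f i))"
  by (induct S rule: infinite_finite_induct) (auto simp: linop_zero linop_add)

lemma linop_lin: "linop T \<Longrightarrow> T (lin f p) = lin (\<lambda>w. T (f w)) p"
  unfolding lin_def by (simp add: linop_sum linop_scale)

lemma linA_zero: "linA T \<Longrightarrow> T 0 = 0"
  unfolding linA_def using Aset_zero fscale_zero_left by metis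

lemma linA_sum:
  assumes T: "linA T" and "\<And>i. i \<in> S \<Longrightarrow> g i \<in> Aset"
  shows "T (\<Sum>i\<in>S. fscale (c i) (g i)) = (\<Sum>i\<in>S. fscale (c i) (T (g i)))"
  using assms(2)
proof (induct S rule: infinite_finite_induct)
  case (infinite A) then show ?case using linA_zero[OF T] by (metis sum.infinite)
next
  case empty then show ?case using linA_zero[OF T] by (metis sum.empty)
next
  case (insert x F)
  have A1: "fscale (c x) (g x) \<in> Aset" using insert by auto
  have A2: "(\<Sum>i\<in>F. fscale (c i) (g i)) \<in> Aset" using insert by (intro Aset_sum) auto
  have "T (\<Sum>i\<in>insert x F. fscale (c i) (g i)) = T (fscale (c x) (g x) + (\<Sum>i\<in>F. fscale (c i) (g i)))"
    using insert by simp
  also have "T (fscale (c x) (g x) + (\<Sum>i\<in>F. fscale (c i) (g i))) = T (fscale (c x) (g x)) + T (\<Sum>i\<in>F. fscale (c i) (g i))"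
    using T A1 A2 unfolding linA_def by blast
  also have "T (fscale (c x) (g x)) = fscale (c x) (T (g x))"
    using T insert unfolding linA_def by auto
  also have "T (\<Sum>i\<in>F. fscale (c i) (g i)) = (\<Sum>i\<in>F. fscale (c i) (T (g i)))"
    using insert by auto
  finally show ?case using insert by simp
qed

lemma linA_lin: "linA T \<Longrightarrow> (\<And>w. w \<in> supp p \<Longrightarrow> f w \<in> Aset) \<Longrightarrow> T (lin f p) = lin (\<lambda>w. T (f w)) p"
  unfolding lin_def by (rule linA_sum) auto

lemma linop_linA: "linop T \<Longrightarrow> linA T"
  by (simp add: linop_def linA_def)

lemma linA_lin_op: "linA (lin f)"
  by (simp add: linA_def lin_add lin_scale)

lemma lin_lin: "(\<And>w. w \<in> supp p \<Longrightarrow> g w \<in> Aset) \<Longrightarrow> lin f (lin g p) = lin (\<lambda>w. lin f (g w)) p"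
  by (rule linA_lin[OF linA_lin_op])



lemma ncmul_apply: "ncmul p q z = (\<Sum>i\<in>{0..length z}. p (take i z) * q (drop i z))"
  by (simp add: ncmul_def)

lemma linop_ncmul_left: "linop (\<lambda>x. ncmul x y)"
  by (simp add: linop_def ncmul_def fun_eq_iff fscale_app sum.distrib sum_distrib_left algebra_simps)

lemma linop_ncmul_right: "linop (ncmul x)"
  by (simp add: linop_def ncmul_def fun_eq_iff fscale_app sum.distrib sum_distrib_left algebra_simps)

lemma supp_fin_sum:
  assumes "p \<in> Aset"
  shows "p x = (\<Sum>u\<in>supp p. if u = x then p u else 0)"
  using assms by (simp add: Aset_iff) (auto simp: supp_def)

lemma ncmul_expand:
  assumes p: "p \<in> Aset" and q: "q \<in> Aset"
  shows "ncmul p q = lin (\<lambda>u. lin (\<lambda>v. delta (u @ v)) q) p"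
proof (rule ext)
  fix z
  have inner: "(\<Sum>v\<in>supp q. q v * delta (u @ v) z) = (if take (length u) z = u then q (drop (length u) z) else 0)" for u
  proof -
    have "(\<Sum>v\<in>supp q. q v * delta (u @ v) z) = (\<Sum>v\<in>supp q. if v = drop (length u) z then (if take (length u) z = u then q v else 0) else 0)"
      by (rule sum.cong) (auto simp: delta_def append_eq_conv_conj, metis append_take_drop_id)
    also have "\<dots> = (if drop (length u) z \<in> supp q then (if take (length u) z = u then q (drop (length u) z) else 0) else 0)"
      using q by (simp add: Aset_iff)
    also have "\<dots> = (if take (length u) z = u then q (drop (length u) z) else 0)"
      by (auto simp: supp_def)
    finally show ?thesis .
  qed
  have "lin (\<lambda>u. lin (\<lambda>v. delta (u @ v)) q) p z = (\<Sum>u\<in>supp p. p u * (\<Sum>v\<in>supp q. q v * delta (u @ v) z))"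
    by (simp add: lin_apply)
  also have "\<dots> = (\<Sum>u\<in>supp p. if take (length u) z = u then p u * q (drop (length u) z) else 0)"
    by (simp add: inner if_distrib cong: if_cong)
  finally have R: "lin (\<lambda>u. lin (\<lambda>v. delta (u @ v)) q) p z = (\<Sum>u\<in>supp p. if take (length u) z = u then p u * q (drop (length u) z) else 0)" .
  have "ncmul p q z = (\<Sum>i\<in>{0..length z}. (\<Sum>u\<in>supp p. if u = take i z then p u else 0) * q (drop i z))"
    unfolding ncmul_apply using supp_fin_sum[OF p] by simp
  also have "\<dots> = (\<Sum>i\<in>{0..length z}. \<Sum>u\<in>supp p. if u = take i z then p u * q (drop i z) else 0)"
    by (simp add: sum_distrib_right) (intro sum.cong refl, auto)
  also have "\<dots> = (\<Sum>u\<in>supp p. \<Sum>i\<in>{0..length z}. if u = take i z then p u * q (drop i z) else 0)"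
    by (rule sum.swap)
  also have "\<dots> = (\<Sum>u\<in>supp p. if take (length u) z = u then p u * q (drop (length u) z) else 0)"
  proof (rule sum.cong[OF refl])
    fix u
    have "(\<Sum>i\<in>{0..length z}. if u = take i z then p u * q (drop i z) else 0)
        = (\<Sum>i\<in>{0..length z}. if i = length u then (if take (length u) z = u then p u * q (drop (length u) z) else 0) else 0)"
      by (rule sum.cong) auto
    also have "\<dots> = (if take (length u) z = u then p u * q (drop (length u) z) else 0)"
      by (auto simp: sum.delta)
    finally show "(\<Sum>i\<in>{0..length z}. if u = take i z then p u * q (drop i z) else 0) = (if take (length u) z = u then p u * q (drop (length u) z) else 0)" .
  qed
  finally show "ncmul p q z = lin (\<lambda>u. lin (\<lambda>v. delta (u @ v)) q) p z" using R by simp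
qed

lemma Aset_ncmul[intro]: "p \<in> Aset \<Longrightarrow> q \<in> Aset \<Longrightarrow> ncmul p q \<in> Aset"
  by (simp add: ncmul_expand Aset_lin)

lemma lin_ncmul:
  assumes "p \<in> Aset" "q \<in> Aset"
  shows "lin F (ncmul p q) = lin (\<lambda>u. lin (\<lambda>v. F (u @ v)) q) p"
  using assms by (simp add: ncmul_expand lin_lin Aset_lin)

lemma ncmul_delta_left: "q \<in> Aset \<Longrightarrow> ncmul (delta x) q = lin (\<lambda>v. delta (x @ v)) q"
  by (simp add: ncmul_expand)

lemma ncmul_delta_right: "p \<in> Aset \<Longrightarrow> ncmul p (delta y) = lin (\<lambda>u. delta (u @ y)) p"
  by (simp add: ncmul_expand)

lemma ncmul_assoc:
  assumes a: "a \<in> Aset" and b: "b \<in> Aset" and c: "c \<in> Aset"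
  shows "ncmul (ncmul a b) c = ncmul a (ncmul b c)"
proof -
  have "ncmul (ncmul a b) c = lin (\<lambda>u. lin (\<lambda>v. ncmul (delta (u @ v)) c) b) a"
    unfolding ncmul_expand[OF a b] linop_lin[OF linop_ncmul_left] by simp
  also have "\<dots> = lin (\<lambda>u. lin (\<lambda>v. lin (\<lambda>w. delta (u @ v @ w)) c) b) a"
    using c by (simp add: ncmul_delta_left)
  finally have L: "ncmul (ncmul a b) c = lin (\<lambda>u. lin (\<lambda>v. lin (\<lambda>w. delta (u @ v @ w)) c) b) a" .
  have "ncmul a (ncmul b c) = lin (\<lambda>v. lin (\<lambda>w. ncmul a (delta (v @ w))) c) b"
    unfolding ncmul_expand[OF b c] linop_lin[OF linop_ncmul_right] by simp
  also have "\<dots> = lin (\<lambda>v. lin (\<lambda>w. lin (\<lambda>u. delta (u @ v @ w)) a) c) b"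
    using a by (simp add: ncmul_delta_right)
  also have "\<dots> = lin (\<lambda>v. lin (\<lambda>u. lin (\<lambda>w. delta (u @ v @ w)) c) a) b"
    by (simp add: lin_swap[of _ a c])
  also have "\<dots> = lin (\<lambda>u. lin (\<lambda>v. lin (\<lambda>w. delta (u @ v @ w)) c) b) a"
    by (rule lin_swap)
  finally show ?thesis using L by simp
qed



lemma linop_lie_left: "linop (\<lambda>x. lie_br x y)"
  using linop_ncmul_left[of y] linop_ncmul_right[of y]
  by (simp add: linop_def lie_br_def fun_eq_iff fscale_app algebra_simps)

lemma linop_lie_right: "linop (lie_br x)"
  using linop_ncmul_left[of x] linop_ncmul_right[of x]
  by (simp add: linop_def lie_br_def fun_eq_iff fscale_app algebra_simps)

lemma Aset_lie_br[intro]: "p \<in> Aset \<Longrightarrow> q \<in> Aset \<Longrightarrow> lie_br p q \<in> Aset"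
  by (simp add: lie_br_def Aset_diff Aset_ncmul)

lemma lie_br_antisym: "lie_br a b = - lie_br b a"
  by (simp add: lie_br_def)

lemma jacobi:
  assumes X: "X \<in> Aset" and Y: "Y \<in> Aset" and Z: "Z \<in> Aset"
  shows "lie_br X (lie_br Y Z) = lie_br (lie_br X Y) Z + lie_br Y (lie_br X Z)"
proof -
  note L = linop_diff[OF linop_ncmul_left] and R = linop_diff[OF linop_ncmul_right]
  have e1: "lie_br X (lie_br Y Z) = ncmul X (ncmul Y Z) - ncmul X (ncmul Z Y) - (ncmul Y (ncmul Z X) - ncmul Z (ncmul Y X))"
    by (simp add: lie_br_def L R ncmul_assoc X Y Z)
  have e2: "lie_br (lie_br X Y) Z = ncmul X (ncmul Y Z) - ncmul Y (ncmul X Z) - (ncmul Z (ncmul X Y) - ncmul Z (ncmul Y X))"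
    by (simp add: lie_br_def L R ncmul_assoc X Y Z)
  have e3: "lie_br Y (lie_br X Z) = ncmul Y (ncmul X Z) - ncmul Y (ncmul Z X) - (ncmul X (ncmul Z Y) - ncmul Z (ncmul X Y))"
    by (simp add: lie_br_def L R ncmul_assoc X Y Z)
  show ?thesis unfolding e1 e2 e3 by (simp add: algebra_simps)
qed

lemma jac1:
  assumes "X \<in> Aset" "Y \<in> Aset" "Z \<in> Aset"
  shows "lie_br X (lie_br Y Z) - lie_br (lie_br Z X) Y = lie_br (lie_br X Y) Z"
  using jacobi[OF assms] lie_br_antisym[of "lie_br Z X" Y] lie_br_antisym[of Z X]
    linop_neg[OF linop_lie_right, of Y "lie_br X Z"]
  by (simp add: algebra_simps)

lemma jac2:
  assumes "X \<in> Aset" "Y \<in> Aset" "Z \<in> Aset"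
  shows "lie_br (lie_br Z X) Y - lie_br X (lie_br Y Z) = lie_br Z (lie_br X Y)"
  using jac1[OF assms] lie_br_antisym[of Z "lie_br X Y"] by (simp add: algebra_simps)

lemma jac3:
  assumes "a \<in> Aset" "b \<in> Aset" "X \<in> Aset"
  shows "lie_br a (lie_br b X) - lie_br b (lie_br a X) = lie_br (lie_br a b) X"
  using jacobi[OF assms] by (simp add: algebra_simps)

lemma jac4:
  assumes "X \<in> Aset" "a \<in> Aset" "b \<in> Aset"
  shows "lie_br (lie_br X a) b - lie_br (lie_br X b) a = lie_br X (lie_br a b)"
  using jacobi[OF assms] lie_br_antisym[of "lie_br X b" a] by (simp add: algebra_simps)

definition Eop :: "ncpoly \<Rightarrow> ncpoly" where
  "Eop p = (\<lambda>w. real (length w) * p w)"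

lemma linop_Eop: "linop Eop"
  by (simp add: linop_def Eop_def fun_eq_iff fscale_app algebra_simps)

lemma Aset_Eop[intro]: "p \<in> Aset \<Longrightarrow> Eop p \<in> Aset"
  unfolding Aset_iff by (rule finite_subset[of _ "supp p"]) (auto simp: supp_def Eop_def)

lemma Eop_ncmul: "Eop (ncmul p q) = ncmul (Eop p) q + ncmul p (Eop q)"
proof (rule ext)
  fix z
  have "Eop (ncmul p q) z = (\<Sum>i\<in>{0..length z}. real (length z) * (p (take i z) * q (drop i z)))"
    by (simp add: Eop_def ncmul_apply sum_distrib_left)
  also have "\<dots> = (\<Sum>i\<in>{0..length z}. real (length (take i z)) * p (take i z) * q (drop i z) + p (take i z) * (real (length (drop i z)) * q (drop i z)))"
    by (rule sum.cong) (auto simp: algebra_simps min_def)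
  also have "\<dots> = (ncmul (Eop p) q + ncmul p (Eop q)) z"
    by (simp add: Eop_def ncmul_apply sum.distrib)
  finally show "Eop (ncmul p q) z = (ncmul (Eop p) q + ncmul p (Eop q)) z" .
qed

lemma Eop_lie: "Eop (lie_br p q) = lie_br (Eop p) q + lie_br p (Eop q)"
  by (simp add: lie_br_def Eop_ncmul linop_diff[OF linop_Eop])

lemma fscale_zero_gen: "fscale 0 (gen b) = 0"
  by (simp add: fscale_zero_left)

lemma FreeLie_induct[consumes 1, case_names gen add scale br]:
  assumes "x \<in> FreeLie"
    and "\<And>b. P (gen b)"
    and "\<And>a b. a \<in> FreeLie \<Longrightarrow> P a \<Longrightarrow> b \<in> FreeLie \<Longrightarrow> P b \<Longrightarrow> P (a + b)"
    and "\<And>a c. a \<in> FreeLie \<Longrightarrow> P a \<Longrightarrow> P (fscale c a)"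
    and "\<And>a b. a \<in> FreeLie \<Longrightarrow> P a \<Longrightarrow> b \<in> FreeLie \<Longrightarrow> P b \<Longrightarrow> P (lie_br a b)"
  shows "P x"
  using assms(1)
proof (induct rule: FreeLie.induct)
  case (gen b) then show ?case by (rule assms(2))
next
  case (add a b) then show ?case using assms(3)[of a b] by blast
next
  case (scale a c) then show ?case using assms(4)[of a c] by blast
next
  case (br a b) then show ?case using assms(5)[of a b] by blast
qed

lemma FreeLie_zero[intro,simp]: "0 \<in> FreeLie"
  using FreeLie.scale[OF FreeLie.gen[of True], of 0] by (simp add: fscale_zero_left)

lemma FreeLie_neg[intro]: "a \<in> FreeLie \<Longrightarrow> - a \<in> FreeLie"
proof -
  assume "a \<in> FreeLie"
  moreover have "- a = fscale (-1) a" by (simp add: fun_eq_iff fscale_app)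
  ultimately show ?thesis by (simp add: FreeLie.scale)
qed

lemma FreeLie_diff[intro]: "a \<in> FreeLie \<Longrightarrow> b \<in> FreeLie \<Longrightarrow> a - b \<in> FreeLie"
  using FreeLie.add[of a "-b"] FreeLie_neg[of b] by simp

lemma FreeLie_sum[intro]: "(\<And>i. i \<in> S \<Longrightarrow> f i \<in> FreeLie) \<Longrightarrow> sum f S \<in> FreeLie"
  by (induct S rule: infinite_finite_induct) (auto intro: FreeLie.add)

lemma gen_delta: "gen b = delta [b]"
  by (simp add: gen_def delta_def)

lemma FreeLie_Aset: "a \<in> FreeLie \<Longrightarrow> a \<in> Aset"
proof (induct rule: FreeLie_induct)
  case (gen b) then show ?case by (simp add: gen_delta)
next
  case (add a b) then show ?case by (blast intro: Aset_add)
next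
  case (scale a c) then show ?case by (blast intro: Aset_scale)
next
  case (br a b) then show ?case by (blast intro: Aset_lie_br)
qed

lemma ncmul_nil: "ncmul p q [] = p [] * q []"
  by (simp add: ncmul_apply)

lemma FreeLie_nil: "a \<in> FreeLie \<Longrightarrow> a [] = 0"
  by (induct rule: FreeLie_induct) (auto simp: gen_def lie_br_def ncmul_nil fscale_app)

lemma FreeLie_supp_nonempty: "a \<in> FreeLie \<Longrightarrow> w \<in> supp a \<Longrightarrow> w \<noteq> []"
  using FreeLie_nil by (auto simp: supp_def)

lemma linop_tensor_left: "linop (\<lambda>a. tensor a b)"
  by (simp add: linop_def tensor_def fun_eq_iff fscale_app algebra_simps)

lemma linop_tensor_right: "linop (tensor a)"
  by (simp add: linop_def tensor_def fun_eq_iff fscale_app algebra_simps)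

lemma mulmap_tensor: "mulmap (tensor a b) = ncmul a b"
  by (simp add: mulmap_def tensor_def ncmul_def)

lemma linop_mulmap: "linop mulmap"
  by (simp add: linop_def mulmap_def fun_eq_iff fscale_app sum.distrib sum_distrib_left)

abbreviation eqv :: "nctensor \<Rightarrow> nctensor \<Rightarrow> bool" where
  "eqv x y \<equiv> x - y \<in> FL_rel"

lemmas FL_add = module.span_add[OF fmod, folded FL_rel_def]

lemma FLr_add: "x \<in> FL_rel \<Longrightarrow> y \<in> FL_rel \<Longrightarrow> x + y \<in> FL_rel"
  unfolding FL_rel_def by (rule module.span_add[OF fmod])
lemma FLr_diff: "x \<in> FL_rel \<Longrightarrow> y \<in> FL_rel \<Longrightarrow> x - y \<in> FL_rel"
  unfolding FL_rel_def by (rule module.span_diff[OF fmod])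
lemma FLr_neg: "x \<in> FL_rel \<Longrightarrow> - x \<in> FL_rel"
  unfolding FL_rel_def by (rule module.span_neg[OF fmod])
lemma FLr_scale: "x \<in> FL_rel \<Longrightarrow> fscale c x \<in> FL_rel"
  unfolding FL_rel_def by (rule module.span_scale[OF fmod])
lemma FLr_zero: "0 \<in> FL_rel"
  unfolding FL_rel_def by (rule module.span_zero[OF fmod])
lemma FLr_sum: "(\<And>i. i \<in> S \<Longrightarrow> f i \<in> FL_rel) \<Longrightarrow> sum f S \<in> FL_rel"
  unfolding FL_rel_def by (rule module.span_sum[OF fmod])

lemma eqv_refl: "eqv x x" by (simp add: FLr_zero)
lemma eqv_sym: "eqv x y \<Longrightarrow> eqv y x"
  using FLr_neg[of "x - y"] by simp
lemma eqv_trans: "eqv x y \<Longrightarrow> eqv y z \<Longrightarrow> eqv x z"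
  using FLr_add[of "x - y" "y - z"] by simp
lemma eqv_add: "eqv x y \<Longrightarrow> eqv x' y' \<Longrightarrow> eqv (x + x') (y + y')"
  using FLr_add[of "x - y" "x' - y'"] by (simp add: algebra_simps)
lemma eqv_diff: "eqv x y \<Longrightarrow> eqv x' y' \<Longrightarrow> eqv (x - x') (y - y')"
  using FLr_diff[of "x - y" "x' - y'"] by (simp add: algebra_simps)
lemma eqv_scale: "eqv x y \<Longrightarrow> eqv (fscale c x) (fscale c y)"
proof -
  assume "eqv x y"
  moreover have "fscale c x - fscale c y = fscale c (x - y)" by (simp add: fun_eq_iff fscale_app algebra_simps)
  ultimately show ?thesis using FLr_scale[of "x - y" c] by simp
qed
lemma eqv_sum: "(\<And>i. i \<in> S \<Longrightarrow> eqv (f i) (g i)) \<Longrightarrow> eqv (sum f S) (sum g S)"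
  using FLr_sum[of S "\<lambda>i. f i - g i"] by (simp add: sum_subtractf)
lemma eqv_lin: "(\<And>w. w \<in> supp p \<Longrightarrow> eqv (f w) (g w)) \<Longrightarrow> eqv (lin f p) (lin g p)"
  unfolding lin_def
  by (rule eqv_sum) (auto intro: eqv_scale)

lemma FL_sym: "a \<in> FreeLie \<Longrightarrow> b \<in> FreeLie \<Longrightarrow> eqv (tensor a b) (tensor b a)"
  unfolding FL_rel_def by (rule module.span_base[OF fmod]) blast

lemma FL_inv: "a \<in> FreeLie \<Longrightarrow> b \<in> FreeLie \<Longrightarrow> c \<in> FreeLie \<Longrightarrow> eqv (tensor a (lie_br b c)) (tensor (lie_br a b) c)"
  unfolding FL_rel_def by (rule module.span_base[OF fmod]) blast



declare plus_fun_apply[simp del]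

lemma linop_comp: "linop S \<Longrightarrow> linop T \<Longrightarrow> linop (\<lambda>x. S (T x))"
  by (simp add: linop_def)

lemma linop_id: "linop (\<lambda>x. x)"
  by (simp add: linop_def)

definition adw :: "bool list \<Rightarrow> ncpoly \<Rightarrow> ncpoly" where
  "adw u X = foldr (\<lambda>c Y. lie_br (gen c) Y) u X"

definition adwR :: "bool list \<Rightarrow> ncpoly \<Rightarrow> ncpoly" where
  "adwR v X = fold (\<lambda>d Y. lie_br Y (gen d)) v X"

lemma adw_simps[simp]: "adw [] X = X" "adw (c # u) X = lie_br (gen c) (adw u X)"
  by (simp_all add: adw_def)

lemma adwR_simps[simp]: "adwR [] X = X" "adwR (d # v) X = adwR v (lie_br X (gen d))"
  by (simp_all add: adwR_def)

lemma adw_append: "adw (u @ v) X = adw u (adw v X)"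
  by (simp add: adw_def)

lemma adwR_append: "adwR (u @ v) X = adwR v (adwR u X)"
  by (simp add: adwR_def)

lemma linop_adw: "linop (adw u)"
proof (induct u)
  case Nil then show ?case by (simp add: linop_id[unfolded fun_eq_iff] adw_def linop_def)
next
  case (Cons c u)
  have "linop (\<lambda>x. lie_br (gen c) (adw u x))" by (rule linop_comp[OF linop_lie_right Cons])
  then show ?case by simp
qed

lemma linop_adwR: "linop (adwR v)"
proof (induct v)
  case Nil then show ?case by (simp add: adwR_def linop_def)
next
  case (Cons d v)
  have "linop (\<lambda>x. adwR v (lie_br x (gen d)))" by (rule linop_comp[OF Cons linop_lie_left])
  then show ?case by simp
qed

lemma adw_FreeLie: "X \<in> FreeLie \<Longrightarrow> adw u X \<in> FreeLie"
  by (induct u) (auto intro: FreeLie.br FreeLie.gen)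

lemma adwR_FreeLie: "X \<in> FreeLie \<Longrightarrow> adwR v X \<in> FreeLie"
  by (induct v arbitrary: X) (auto intro: FreeLie.br FreeLie.gen)

lemma Aset_gen[intro,simp]: "gen c \<in> Aset"
  by (simp add: gen_delta)

lemma adw_Aset: "X \<in> Aset \<Longrightarrow> adw u X \<in> Aset"
  by (induct u) auto

lemma adwR_Aset: "X \<in> Aset \<Longrightarrow> adwR v X \<in> Aset"
  by (induct v arbitrary: X) auto

primrec Dw :: "bool list \<Rightarrow> ncpoly" where
  "Dw [] = 0"
| "Dw (c # v) = (if v = [] then gen c else lie_br (gen c) (Dw v))"

definition DLw :: "bool list \<Rightarrow> ncpoly" where
  "DLw w = (case w of [] \<Rightarrow> 0 | c # u \<Rightarrow> adwR u (gen c))"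

lemma DLw_simps[simp]: "DLw [] = 0" "DLw (c # u) = adwR u (gen c)"
  by (simp_all add: DLw_def)

lemma Dw_append: "v \<noteq> [] \<Longrightarrow> Dw (u @ v) = adw u (Dw v)"
  by (induct u) auto

lemma DLw_append: "u \<noteq> [] \<Longrightarrow> DLw (u @ v) = adwR v (DLw u)"
  by (cases u) (auto simp: adwR_append)

lemma FreeLie_zero'[simp]: "(\<lambda>x. 0) \<in> FreeLie"
  using FreeLie_zero by (simp add: zero_fun_def)

lemma Dw_FreeLie[intro]: "Dw w \<in> FreeLie"
  by (induct w) (auto intro: FreeLie.br FreeLie.gen)

lemma DLw_FreeLie[intro]: "DLw w \<in> FreeLie"
  by (cases w) (auto intro: adwR_FreeLie FreeLie.gen)

lemma Dw_Aset[intro]: "Dw w \<in> Aset" by (rule FreeLie_Aset) auto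
lemma DLw_Aset[intro]: "DLw w \<in> Aset" by (rule FreeLie_Aset) auto

lemma lin_gen[simp]: "lin f (gen b) = f [b]"
  by (simp add: gen_delta)

lemma K0a: "a \<in> FreeLie \<Longrightarrow> X \<in> Aset \<Longrightarrow> lin (\<lambda>u. adw u X) a = lie_br a X"
proof (induct a arbitrary: X rule: FreeLie_induct)
  case (gen b) then show ?case by simp
next
  case (add a b)
  then show ?case using FreeLie_Aset[of a] FreeLie_Aset[of b]
    by (simp add: lin_add linop_add[OF linop_lie_left])
next
  case (scale a c)
  then show ?case by (simp add: lin_scale linop_scale[OF linop_lie_left])
next
  case (br a b)
  have aA: "a \<in> Aset" and bA: "b \<in> Aset" using br FreeLie_Aset by auto
  have 1: "lin (\<lambda>u. adw u X) (ncmul a b) = lie_br a (lie_br b X)"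
    if aA: "a \<in> Aset" and bA: "b \<in> Aset" and IHa: "\<And>X. X \<in> Aset \<Longrightarrow> lin (\<lambda>u. adw u X) a = lie_br a X"
      and IHb: "\<And>X. X \<in> Aset \<Longrightarrow> lin (\<lambda>u. adw u X) b = lie_br b X" for a b
  proof -
    have "lin (\<lambda>u. adw u X) (ncmul a b) = lin (\<lambda>u. lin (\<lambda>v. adw u (adw v X)) b) a"
      by (simp add: lin_ncmul aA bA adw_append)
    also have "\<dots> = lin (\<lambda>u. adw u (lin (\<lambda>v. adw v X) b)) a"
      by (simp add: linop_lin[OF linop_adw])
    also have "\<dots> = lie_br a (lie_br b X)"
      using IHb[OF br.prems] IHa[of "lie_br b X"] br.prems bA by auto
    finally show ?thesis .
  qed
  have "lin (\<lambda>u. adw u X) (lie_br a b) = lin (\<lambda>u. adw u X) (ncmul a b) - lin (\<lambda>u. adw u X) (ncmul b a)"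
    unfolding lie_br_def using aA bA by (simp add: lin_diff Aset_ncmul)
  also have "\<dots> = lie_br a (lie_br b X) - lie_br b (lie_br a X)"
    using 1[OF aA bA] 1[OF bA aA] br by simp
  also have "\<dots> = lie_br (lie_br a b) X"
    by (rule jac3) (use aA bA br.prems in auto)
  finally show ?case .
qed

lemma K0b: "b \<in> FreeLie \<Longrightarrow> X \<in> Aset \<Longrightarrow> lin (\<lambda>v. adwR v X) b = lie_br X b"
proof (induct b arbitrary: X rule: FreeLie_induct)
  case (gen b) then show ?case by simp
next
  case (add a b)
  then show ?case using FreeLie_Aset[of a] FreeLie_Aset[of b]
    by (simp add: lin_add linop_add[OF linop_lie_right])
next
  case (scale a c)
  then show ?case by (simp add: lin_scale linop_scale[OF linop_lie_right])
next
  case (br a b)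
  have aA: "a \<in> Aset" and bA: "b \<in> Aset" using br FreeLie_Aset by auto
  have 1: "lin (\<lambda>u. adwR u X) (ncmul a b) = lie_br (lie_br X a) b"
    if aA: "a \<in> Aset" and bA: "b \<in> Aset" and IHa: "\<And>X. X \<in> Aset \<Longrightarrow> lin (\<lambda>u. adwR u X) a = lie_br X a"
      and IHb: "\<And>X. X \<in> Aset \<Longrightarrow> lin (\<lambda>u. adwR u X) b = lie_br X b" for a b
  proof -
    have "lin (\<lambda>u. adwR u X) (ncmul a b) = lin (\<lambda>u. lin (\<lambda>v. adwR v (adwR u X)) b) a"
      by (simp add: lin_ncmul aA bA adwR_append)
    also have "\<dots> = lin (\<lambda>u. lie_br (adwR u X) b) a"
      using IHb adwR_Aset[OF br.prems] by simp
    also have "\<dots> = lie_br (lin (\<lambda>u. adwR u X) a) b"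
      by (simp add: linop_lin[OF linop_lie_left])
    also have "\<dots> = lie_br (lie_br X a) b"
      using IHa[OF br.prems] by simp
    finally show ?thesis .
  qed
  have "lin (\<lambda>u. adwR u X) (lie_br a b) = lin (\<lambda>u. adwR u X) (ncmul a b) - lin (\<lambda>u. adwR u X) (ncmul b a)"
    unfolding lie_br_def using aA bA by (simp add: lin_diff Aset_ncmul)
  also have "\<dots> = lie_br (lie_br X a) b - lie_br (lie_br X b) a"
    using 1[OF aA bA] 1[OF bA aA] br by simp
  also have "\<dots> = lie_br X (lie_br a b)"
    by (rule jac4) (use aA bA br.prems in auto)
  finally show ?case .
qed

lemma Eop_gen[simp]: "Eop (gen b) = gen b"
  by (simp add: Eop_def gen_def fun_eq_iff)

lemma K1a: "a \<in> FreeLie \<Longrightarrow> lin Dw a = Eop a"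
proof (induct a rule: FreeLie_induct)
  case (gen b) then show ?case by simp
next
  case (add a b)
  then show ?case using FreeLie_Aset[of a] FreeLie_Aset[of b]
    by (simp add: lin_add linop_add[OF linop_Eop])
next
  case (scale a c)
  then show ?case by (simp add: lin_scale linop_scale[OF linop_Eop])
next
  case (br a b)
  have aA: "a \<in> Aset" and bA: "b \<in> Aset" using br FreeLie_Aset by auto
  have 1: "lin Dw (ncmul a b) = lie_br a (Eop b)"
    if aL: "a \<in> FreeLie" and bL: "b \<in> FreeLie" and IHb: "lin Dw b = Eop b" for a b
  proof -
    have aA: "a \<in> Aset" and bA: "b \<in> Aset" using aL bL FreeLie_Aset by auto
    have "lin Dw (ncmul a b) = lin (\<lambda>u. lin (\<lambda>v. Dw (u @ v)) b) a"
      by (simp add: lin_ncmul aA bA)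
    also have "\<dots> = lin (\<lambda>u. lin (\<lambda>v. adw u (Dw v)) b) a"
      by (intro lin_cong) (simp add: Dw_append FreeLie_supp_nonempty[OF bL])
    also have "\<dots> = lin (\<lambda>u. adw u (Eop b)) a"
      by (simp add: linop_lin[OF linop_adw, symmetric] IHb)
    also have "\<dots> = lie_br a (Eop b)"
      using K0a[OF aL, of "Eop b"] bA by auto
    finally show ?thesis .
  qed
  have "lin Dw (lie_br a b) = lin Dw (ncmul a b) - lin Dw (ncmul b a)"
    unfolding lie_br_def using aA bA by (simp add: lin_diff Aset_ncmul)
  also have "\<dots> = lie_br a (Eop b) - lie_br b (Eop a)"
    using 1[of a b] 1[of b a] br by simp
  also have "\<dots> = Eop (lie_br a b)"
    by (simp add: Eop_lie lie_br_antisym[of b "Eop a"])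
  finally show ?case .
qed

lemma K1b: "a \<in> FreeLie \<Longrightarrow> lin DLw a = Eop a"
proof (induct a rule: FreeLie_induct)
  case (gen b) then show ?case by simp
next
  case (add a b)
  then show ?case using FreeLie_Aset[of a] FreeLie_Aset[of b]
    by (simp add: lin_add linop_add[OF linop_Eop])
next
  case (scale a c)
  then show ?case by (simp add: lin_scale linop_scale[OF linop_Eop])
next
  case (br a b)
  have aA: "a \<in> Aset" and bA: "b \<in> Aset" using br FreeLie_Aset by auto
  have 1: "lin DLw (ncmul a b) = lie_br (Eop a) b"
    if aL: "a \<in> FreeLie" and bL: "b \<in> FreeLie" and IHa: "lin DLw a = Eop a" for a b
  proof -
    have aA: "a \<in> Aset" and bA: "b \<in> Aset" using aL bL FreeLie_Aset by auto
    have "lin DLw (ncmul a b) = lin (\<lambda>u. lin (\<lambda>v. DLw (u @ v)) b) a"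
      by (simp add: lin_ncmul aA bA)
    also have "\<dots> = lin (\<lambda>u. lin (\<lambda>v. adwR v (DLw u)) b) a"
      by (intro lin_cong) (simp add: DLw_append FreeLie_supp_nonempty[OF aL])
    also have "\<dots> = lin (\<lambda>u. lie_br (DLw u) b) a"
      by (intro lin_cong) (rule K0b[OF bL DLw_Aset])
    also have "\<dots> = lie_br (Eop a) b"
      by (simp add: linop_lin[OF linop_lie_left, symmetric] IHa)
    finally show ?thesis .
  qed
  have "lin DLw (lie_br a b) = lin DLw (ncmul a b) - lin DLw (ncmul b a)"
    unfolding lie_br_def using aA bA by (simp add: lin_diff Aset_ncmul)
  also have "\<dots> = lie_br (Eop a) b - lie_br (Eop b) a"
    using 1[of a b] 1[of b a] br by simp
  also have "\<dots> = Eop (lie_br a b)"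
    by (simp add: Eop_lie lie_br_antisym[of "Eop b" a])
  finally show ?case .
qed



declare plus_fun_apply[simp del] minus_apply[simp del] uminus_apply[simp del]

definition Gw :: "bool list \<Rightarrow> ncpoly" where
  "Gw v = (\<Sum>j\<in>{1..<length v}. lie_br (Dw (take j v)) (DLw (drop j v)))"

lemma Gw_append:
  assumes u: "u \<noteq> []" and v: "v \<noteq> []"
  shows "Gw (u @ v) = (\<Sum>j\<in>{1..<length u}. lie_br (Dw (take j u)) (adwR v (DLw (drop j u))))
     + lie_br (Dw u) (DLw v)
     + (\<Sum>j\<in>{1..<length v}. lie_br (adw u (Dw (take j v))) (DLw (drop j v)))"
proof -
  let ?f = "\<lambda>j. lie_br (Dw (take j (u @ v))) (DLw (drop j (u @ v)))"
  have lu: "1 \<le> length u" "length u < length u + length v" using u v by (auto simp: Suc_le_eq)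
  have "Gw (u @ v) = sum ?f {1..<length u} + sum ?f {length u..<length u + length v}"
    unfolding Gw_def length_append by (rule sum.atLeastLessThan_concat[symmetric]) (use lu in auto)
  also have "sum ?f {length u..<length u + length v} = ?f (length u) + sum ?f {Suc (length u)..<length u + length v}"
    using lu by (simp add: sum.atLeast_Suc_lessThan)
  also have "sum ?f {Suc (length u)..<length u + length v} = sum (\<lambda>i. ?f (i + length u)) {1..<length v}"
    using sum.shift_bounds_nat_ivl[of ?f 1 "length u" "length v"] by (simp add: add.commute)
  also have "\<dots> = (\<Sum>j\<in>{1..<length v}. lie_br (adw u (Dw (take j v))) (DLw (drop j v)))"
  proof (rule sum.cong[OF refl])
    fix j assume j: "j \<in> {1..<length v}"
    then have "take j v \<noteq> []" using v by auto
    then show "?f (j + length u) = lie_br (adw u (Dw (take j v))) (DLw (drop j v))"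
      by (simp add: Dw_append)
  qed
  also have "sum ?f {1..<length u} = (\<Sum>j\<in>{1..<length u}. lie_br (Dw (take j u)) (adwR v (DLw (drop j u))))"
  proof (rule sum.cong[OF refl])
    fix j assume j: "j \<in> {1..<length u}"
    then have "drop j u \<noteq> []" by auto
    then show "?f j = lie_br (Dw (take j u)) (adwR v (DLw (drop j u)))"
      using j by (simp add: DLw_append)
  qed
  finally show ?thesis by (simp add: add.assoc)
qed

lemma Gw_Aset[intro]: "Gw v \<in> Aset"
  unfolding Gw_def by (intro Aset_sum Aset_lie_br) auto

lemma Gw_FreeLie[intro]: "Gw v \<in> FreeLie"
  unfolding Gw_def by (intro FreeLie_sum FreeLie.br) auto

lemma Gprod:
  assumes aL: "a \<in> FreeLie" and bL: "b \<in> FreeLie"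
  shows "lin Gw (ncmul a b) =
     lin (\<lambda>u. \<Sum>j\<in>{1..<length u}. lie_br (Dw (take j u)) (lie_br (DLw (drop j u)) b)) a
     + lie_br (Eop a) (Eop b)
     + lin (\<lambda>v. \<Sum>j\<in>{1..<length v}. lie_br (lie_br a (Dw (take j v))) (DLw (drop j v))) b"
proof -
  have aA: "a \<in> Aset" and bA: "b \<in> Aset" using aL bL FreeLie_Aset by auto
  let ?T1 = "\<lambda>u v. \<Sum>j\<in>{1..<length u}. lie_br (Dw (take j u)) (adwR v (DLw (drop j u)))"
  let ?T2 = "\<lambda>u v. lie_br (Dw u) (DLw v)"
  let ?T3 = "\<lambda>u v. \<Sum>j\<in>{1..<length v}. lie_br (adw u (Dw (take j v))) (DLw (drop j v))"
  have "lin Gw (ncmul a b) = lin (\<lambda>u. lin (\<lambda>v. Gw (u @ v)) b) a"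
    by (simp add: lin_ncmul aA bA)
  also have "\<dots> = lin (\<lambda>u. lin (\<lambda>v. ?T1 u v + ?T2 u v + ?T3 u v) b) a"
    by (intro lin_cong) (simp add: Gw_append FreeLie_supp_nonempty[OF aL] FreeLie_supp_nonempty[OF bL])
  also have "\<dots> = lin (\<lambda>u. lin (?T1 u) b) a + lin (\<lambda>u. lin (?T2 u) b) a + lin (\<lambda>u. lin (?T3 u) b) a"
    by (simp add: lin_fadd)
  also have "lin (\<lambda>u. lin (?T1 u) b) a = lin (\<lambda>u. \<Sum>j\<in>{1..<length u}. lie_br (Dw (take j u)) (lie_br (DLw (drop j u)) b)) a"
  proof (rule lin_cong)
    fix u
    have "lin (?T1 u) b = (\<Sum>j\<in>{1..<length u}. lin (\<lambda>v. lie_br (Dw (take j u)) (adwR v (DLw (drop j u)))) b)"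
      by (rule lin_fsum)
    also have "\<dots> = (\<Sum>j\<in>{1..<length u}. lie_br (Dw (take j u)) (lin (\<lambda>v. adwR v (DLw (drop j u))) b))"
      by (simp add: linop_lin[OF linop_lie_right])
    also have "\<dots> = (\<Sum>j\<in>{1..<length u}. lie_br (Dw (take j u)) (lie_br (DLw (drop j u)) b))"
      by (simp add: K0b[OF bL DLw_Aset])
    finally show "lin (?T1 u) b = (\<Sum>j\<in>{1..<length u}. lie_br (Dw (take j u)) (lie_br (DLw (drop j u)) b))" .
  qed
  also have "lin (\<lambda>u. lin (?T2 u) b) a = lie_br (Eop a) (Eop b)"
  proof -
    have "lin (\<lambda>u. lin (?T2 u) b) a = lin (\<lambda>u. lie_br (Dw u) (lin DLw b)) a"
      by (simp add: linop_lin[OF linop_lie_right])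
    also have "\<dots> = lie_br (lin Dw a) (lin DLw b)"
      by (simp add: linop_lin[OF linop_lie_left])
    finally show ?thesis by (simp add: K1a[OF aL] K1b[OF bL])
  qed
  also have "lin (\<lambda>u. lin (?T3 u) b) a = lin (\<lambda>v. \<Sum>j\<in>{1..<length v}. lie_br (lie_br a (Dw (take j v))) (DLw (drop j v))) b"
  proof -
    have "lin (\<lambda>u. lin (?T3 u) b) a = lin (\<lambda>v. lin (\<lambda>u. ?T3 u v) a) b"
      by (rule lin_swap)
    also have "\<dots> = lin (\<lambda>v. \<Sum>j\<in>{1..<length v}. lie_br (lie_br a (Dw (take j v))) (DLw (drop j v))) b"
    proof (rule lin_cong)
      fix v
      have "lin (\<lambda>u. ?T3 u v) a = (\<Sum>j\<in>{1..<length v}. lin (\<lambda>u. lie_br (adw u (Dw (take j v))) (DLw (drop j v))) a)"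
        by (rule lin_fsum)
      also have "\<dots> = (\<Sum>j\<in>{1..<length v}. lie_br (lin (\<lambda>u. adw u (Dw (take j v))) a) (DLw (drop j v)))"
        by (simp add: linop_lin[OF linop_lie_left])
      also have "\<dots> = (\<Sum>j\<in>{1..<length v}. lie_br (lie_br a (Dw (take j v))) (DLw (drop j v)))"
        by (simp add: K0a[OF aL Dw_Aset])
      finally show "lin (\<lambda>u. ?T3 u v) a = (\<Sum>j\<in>{1..<length v}. lie_br (lie_br a (Dw (take j v))) (DLw (drop j v)))" .
    qed
    finally show ?thesis .
  qed
  finally show ?thesis .
qed

lemma K2: "a \<in> FreeLie \<Longrightarrow> lin Gw a = Eop (Eop a) - Eop a"
proof (induct a rule: FreeLie_induct)
  case (gen b)
  have "Gw [b] = 0" by (simp add: Gw_def)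
  then show ?case by simp
next
  case (add a b)
  then show ?case using FreeLie_Aset[of a] FreeLie_Aset[of b]
    by (simp add: lin_add linop_add[OF linop_Eop])
next
  case (scale a c)
  have fd: "fscale c (x - y) = fscale c x - fscale c y" for x y :: ncpoly
    by (simp add: fun_eq_iff fscale_app algebra_simps minus_apply)
  from scale show ?case by (simp add: lin_scale linop_scale[OF linop_Eop] fd)
next
  case (br a b)
  have aA: "a \<in> Aset" and bA: "b \<in> Aset" using br FreeLie_Aset by auto
  let ?X = "\<lambda>u j. Dw (take j u)" and ?Y = "\<lambda>u j. DLw (drop j u)"
  have "lin Gw (lie_br a b) = lin Gw (ncmul a b) - lin Gw (ncmul b a)"
    unfolding lie_br_def using aA bA by (simp add: lin_diff Aset_ncmul)
  also have "\<dots> = (lin (\<lambda>u. \<Sum>j\<in>{1..<length u}. lie_br (?X u j) (lie_br (?Y u j) b)) a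
                 - lin (\<lambda>u. \<Sum>j\<in>{1..<length u}. lie_br (lie_br b (?X u j)) (?Y u j)) a)
            + (lie_br (Eop a) (Eop b) - lie_br (Eop b) (Eop a))
            + (lin (\<lambda>v. \<Sum>j\<in>{1..<length v}. lie_br (lie_br a (?X v j)) (?Y v j)) b
                 - lin (\<lambda>v. \<Sum>j\<in>{1..<length v}. lie_br (?X v j) (lie_br (?Y v j) a)) b)"
    unfolding Gprod[OF br(1) br(3)] Gprod[OF br(3) br(1)] by (simp add: algebra_simps)
  also have "lin (\<lambda>u. \<Sum>j\<in>{1..<length u}. lie_br (?X u j) (lie_br (?Y u j) b)) a
                 - lin (\<lambda>u. \<Sum>j\<in>{1..<length u}. lie_br (lie_br b (?X u j)) (?Y u j)) a
           = lie_br (lin Gw a) b"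
  proof -
    have "lin (\<lambda>u. \<Sum>j\<in>{1..<length u}. lie_br (?X u j) (lie_br (?Y u j) b)) a
                 - lin (\<lambda>u. \<Sum>j\<in>{1..<length u}. lie_br (lie_br b (?X u j)) (?Y u j)) a
        = lin (\<lambda>u. \<Sum>j\<in>{1..<length u}. lie_br (?X u j) (lie_br (?Y u j) b) - lie_br (lie_br b (?X u j)) (?Y u j)) a"
      by (simp add: lin_fdiff sum_subtractf)
    also have "\<dots> = lin (\<lambda>u. \<Sum>j\<in>{1..<length u}. lie_br (lie_br (?X u j) (?Y u j)) b) a"
      using jac1[OF Dw_Aset DLw_Aset bA] by simp
    also have "\<dots> = lin (\<lambda>u. lie_br (Gw u) b) a"
      by (simp add: Gw_def linop_sum[OF linop_lie_left])
    also have "\<dots> = lie_br (lin Gw a) b"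
      by (simp add: linop_lin[OF linop_lie_left])
    finally show ?thesis .
  qed
  also have "lin (\<lambda>v. \<Sum>j\<in>{1..<length v}. lie_br (lie_br a (?X v j)) (?Y v j)) b
                 - lin (\<lambda>v. \<Sum>j\<in>{1..<length v}. lie_br (?X v j) (lie_br (?Y v j) a)) b
           = lie_br a (lin Gw b)"
  proof -
    have "lin (\<lambda>v. \<Sum>j\<in>{1..<length v}. lie_br (lie_br a (?X v j)) (?Y v j)) b
                 - lin (\<lambda>v. \<Sum>j\<in>{1..<length v}. lie_br (?X v j) (lie_br (?Y v j) a)) b
        = lin (\<lambda>v. \<Sum>j\<in>{1..<length v}. lie_br (lie_br a (?X v j)) (?Y v j) - lie_br (?X v j) (lie_br (?Y v j) a)) b"
      by (simp add: lin_fdiff sum_subtractf)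
    also have "\<dots> = lin (\<lambda>v. \<Sum>j\<in>{1..<length v}. lie_br a (lie_br (?X v j) (?Y v j))) b"
      using jac2[OF Dw_Aset DLw_Aset aA] by simp
    also have "\<dots> = lin (\<lambda>v. lie_br a (Gw v)) b"
      by (simp add: Gw_def linop_sum[OF linop_lie_right])
    also have "\<dots> = lie_br a (lin Gw b)"
      by (simp add: linop_lin[OF linop_lie_right])
    finally show ?thesis .
  qed
  finally have G: "lin Gw (lie_br a b) = lie_br (lin Gw a) b + (lie_br (Eop a) (Eop b) - lie_br (Eop b) (Eop a)) + lie_br a (lin Gw b)" .
  have E1: "Eop (lie_br a b) = lie_br (Eop a) b + lie_br a (Eop b)" by (rule Eop_lie)
  have E2: "Eop (lie_br (Eop a) b + lie_br a (Eop b)) = lie_br (Eop (Eop a)) b + lie_br (Eop a) (Eop b) + (lie_br (Eop a) (Eop b) + lie_br a (Eop (Eop b)))"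
  proof -
    have "Eop (lie_br (Eop a) b + lie_br a (Eop b)) = Eop (lie_br (Eop a) b) + Eop (lie_br a (Eop b))"
      by (rule linop_add[OF linop_Eop])
    then show ?thesis by (simp add: Eop_lie)
  qed
  have R: "lin Gw (lie_br a b) = Eop (Eop (lie_br a b)) - Eop (lie_br a b)"
    unfolding G E1 E2 br(2) br(4)
    by (simp add: linop_diff[OF linop_lie_left] linop_diff[OF linop_lie_right] lie_br_antisym[of "Eop b" "Eop a"] algebra_simps)
  show ?case by (rule R)
qed



declare plus_fun_apply[simp del] minus_apply[simp del] uminus_apply[simp del]

definition Qw :: "bool list \<Rightarrow> nctensor" where
  "Qw w = (case w of [] \<Rightarrow> 0 | c # v \<Rightarrow> tensor (gen c) (Dw v))"

lemma Qw_Cons[simp]: "Qw (c # v) = tensor (gen c) (Dw v)"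
  by (simp add: Qw_def)

definition rhow :: "bool list \<Rightarrow> nctensor" where
  "rhow w = fscale (1 / (real (length w) * (real (length w) - 1))) (\<Sum>k<length w. Qw (rotate k w))"

definition rho :: "ncpoly \<Rightarrow> nctensor" where
  "rho p = lin rhow p"

lemma tensor_adw:
  assumes "P \<in> FreeLie" "X \<in> FreeLie"
  shows "eqv (tensor P (adw u X)) (tensor (adwR u P) X)"
  using assms(1)
proof (induct u arbitrary: P)
  case Nil then show ?case by (simp only: adw_simps adwR_simps) (rule eqv_refl)
next
  case (Cons d u)
  have 1: "eqv (tensor P (lie_br (gen d) (adw u X))) (tensor (lie_br P (gen d)) (adw u X))"
    by (rule FL_inv) (use Cons.prems assms(2) adw_FreeLie FreeLie.gen in auto)
  have 2: "eqv (tensor (lie_br P (gen d)) (adw u X)) (tensor (adwR u (lie_br P (gen d))) X)"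
    by (rule Cons.hyps) (use Cons.prems FreeLie.br FreeLie.gen in auto)
  show ?case using eqv_trans[OF 1 2] by simp
qed

lemma Rot:
  assumes x: "x \<noteq> []" and y: "y \<noteq> []"
  shows "eqv (Qw (x @ y)) (tensor (Dw y) (DLw x))"
proof -
  obtain c x' where xc: "x = c # x'" using x by (cases x) auto
  have "Qw (x @ y) = tensor (gen c) (adw x' (Dw y))"
    using y by (simp add: xc Dw_append)
  moreover have "eqv (tensor (gen c) (adw x' (Dw y))) (tensor (adwR x' (gen c)) (Dw y))"
    by (rule tensor_adw) (auto intro: FreeLie.gen)
  moreover have "adwR x' (gen c) = DLw x" by (simp add: xc)
  moreover have "eqv (tensor (DLw x) (Dw y)) (tensor (Dw y) (DLw x))"
    by (rule FL_sym) auto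
  ultimately show ?thesis using eqv_trans by metis
qed

lemma sum_rotate:
  fixes f :: "bool list \<Rightarrow> 'b::ab_group_add"
  shows "(\<Sum>k<length w. f (rotate k (rotate m w))) = (\<Sum>k<length w. f (rotate k w))"
proof (induct m)
  case 0 then show ?case by simp
next
  case (Suc m)
  let ?n = "length w"
  let ?g = "\<lambda>k. f (rotate (k + m) w)"
  have A: "(\<Sum>k<?n. f (rotate k (rotate (Suc m) w))) = (\<Sum>k<?n. ?g (Suc k))"
    by (simp only: rotate_rotate add_Suc_right add_Suc)
  have B: "(\<Sum>k<Suc ?n. ?g k) = ?g 0 + (\<Sum>k<?n. ?g (Suc k))"
    by (rule sum.lessThan_Suc_shift)
  have C: "(\<Sum>k<Suc ?n. ?g k) = (\<Sum>k<?n. ?g k) + ?g ?n"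
    by simp
  have D: "?g ?n = ?g 0"
    by (metis add_0 mod_add_self1 rotate_conv_mod)
  have E: "(\<Sum>k<?n. ?g k) = (\<Sum>k<?n. f (rotate k w))"
    using Suc by (simp add: rotate_rotate)
  have F: "(\<Sum>k<?n. ?g (Suc k)) = (\<Sum>k<?n. ?g k)"
  proof -
    have "?g 0 + (\<Sum>k<?n. ?g (Suc k)) = ?g 0 + (\<Sum>k<?n. ?g k)"
      using B C D by (simp add: add.commute)
    then show ?thesis by (rule add_left_imp_eq)
  qed
  show ?case using trans[OF trans[OF A F] E] .
qed

lemma rhow_cyc: "rhow (u @ v) = rhow (v @ u)"
proof -
  have "v @ u = rotate (length u) (u @ v)" by (simp add: rotate_append)
  then show ?thesis unfolding rhow_def
    using sum_rotate[where f=Qw and w="u @ v" and m="length u"] by simp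
qed

lemma rho_comm:
  assumes "p \<in> Aset" "q \<in> Aset"
  shows "rho (ncmul p q) = rho (ncmul q p)"
proof -
  have "rho (ncmul p q) = lin (\<lambda>u. lin (\<lambda>v. rhow (u @ v)) q) p"
    unfolding rho_def by (rule lin_ncmul[OF assms])
  also have "\<dots> = lin (\<lambda>v. lin (\<lambda>u. rhow (u @ v)) p) q"
    by (rule lin_swap)
  also have "\<dots> = lin (\<lambda>v. lin (\<lambda>u. rhow (v @ u)) p) q"
    by (simp add: rhow_cyc)
  also have "\<dots> = rho (ncmul q p)"
    unfolding rho_def by (rule lin_ncmul[OF assms(2,1), symmetric])
  finally show ?thesis .
qed

lemma linA_rho: "linA rho"
  unfolding rho_def[abs_def] by (rule linA_lin_op)

lemma rho_add: "p \<in> Aset \<Longrightarrow> q \<in> Aset \<Longrightarrow> rho (p + q) = rho p + rho q"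
  by (simp add: rho_def lin_add)
lemma rho_diff: "p \<in> Aset \<Longrightarrow> q \<in> Aset \<Longrightarrow> rho (p - q) = rho p - rho q"
  by (simp add: rho_def lin_diff)
lemma rho_scale: "rho (fscale r p) = fscale r (rho p)"
  by (simp add: rho_def lin_scale)

lemma rho_lie: "p \<in> Aset \<Longrightarrow> q \<in> Aset \<Longrightarrow> rho (lie_br p q) = 0"
  unfolding lie_br_def by (simp add: rho_diff Aset_ncmul rho_comm[of p q])



declare plus_fun_apply[simp del] minus_apply[simp del] uminus_apply[simp del]

lemma tensor_add_right: "tensor a (x + y) = tensor a x + tensor a y"
  by (rule linop_add[OF linop_tensor_right])

lemma per_word_sum:
  assumes v: "v \<noteq> []"
  shows "eqv (\<Sum>k<length (c # v). Qw (rotate k (c # v))) (tensor (gen c) (Dw v + DLw v + Gw v))"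
proof -
  let ?m = "length v"
  let ?w = "c # v"
  have m1: "0 < ?m" using v by simp
  have S0: "(\<Sum>k<length ?w. Qw (rotate k ?w)) = Qw ?w + (\<Sum>k<?m. Qw (rotate (Suc k) ?w))"
    by (simp only: length_Cons sum.lessThan_Suc_shift rotate0 id_apply)
  have S1: "eqv (\<Sum>k<?m. Qw (rotate (Suc k) ?w)) (\<Sum>k<?m. tensor (Dw (c # take k v)) (DLw (drop k v)))"
  proof (rule eqv_sum)
    fix k assume k: "k \<in> {..<?m}"
    have r: "rotate (Suc k) ?w = drop k v @ (c # take k v)"
      using k by (simp add: rotate_drop_take)
    have "drop k v \<noteq> []" using k by simp
    then show "eqv (Qw (rotate (Suc k) ?w)) (tensor (Dw (c # take k v)) (DLw (drop k v)))"
      unfolding r by (rule Rot) simp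
  qed
  have S2: "(\<Sum>k<?m. tensor (Dw (c # take k v)) (DLw (drop k v)))
      = tensor (gen c) (DLw v) + (\<Sum>k\<in>{1..<?m}. tensor (Dw (c # take k v)) (DLw (drop k v)))"
    using m1 by (simp add: lessThan_atLeast0 sum.atLeast_Suc_lessThan)
  have S3: "eqv (\<Sum>k\<in>{1..<?m}. tensor (Dw (c # take k v)) (DLw (drop k v)))
      (\<Sum>k\<in>{1..<?m}. tensor (gen c) (lie_br (Dw (take k v)) (DLw (drop k v))))"
  proof (rule eqv_sum)
    fix k assume k: "k \<in> {1..<?m}"
    then have "take k v \<noteq> []" using v by auto
    then have "Dw (c # take k v) = lie_br (gen c) (Dw (take k v))" by simp
    moreover have "eqv (tensor (gen c) (lie_br (Dw (take k v)) (DLw (drop k v))))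
        (tensor (lie_br (gen c) (Dw (take k v))) (DLw (drop k v)))"
      by (rule FL_inv) (auto intro: FreeLie.gen)
    ultimately show "eqv (tensor (Dw (c # take k v)) (DLw (drop k v)))
        (tensor (gen c) (lie_br (Dw (take k v)) (DLw (drop k v))))"
      using eqv_sym by simp
  qed
  have S4: "(\<Sum>k\<in>{1..<?m}. tensor (gen c) (lie_br (Dw (take k v)) (DLw (drop k v)))) = tensor (gen c) (Gw v)"
    unfolding Gw_def by (simp add: linop_sum[OF linop_tensor_right])
  have T: "tensor (gen c) (Dw v + DLw v + Gw v) = Qw ?w + (tensor (gen c) (DLw v) + tensor (gen c) (Gw v))"
    by (simp add: tensor_add_right add.assoc)
  show ?thesis
    unfolding S0 T
  proof (rule eqv_add[OF eqv_refl])
    have "eqv (tensor (gen c) (DLw v) + (\<Sum>k\<in>{1..<?m}. tensor (Dw (c # take k v)) (DLw (drop k v))))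
        (tensor (gen c) (DLw v) + tensor (gen c) (Gw v))"
      using eqv_add[OF eqv_refl S3] unfolding S4 .
    then show "eqv (\<Sum>k<?m. Qw (rotate (Suc k) ?w)) (tensor (gen c) (DLw v) + tensor (gen c) (Gw v))"
      using eqv_trans[OF S1] unfolding S2 by blast
  qed
qed

lemma per_word:
  assumes v: "v \<noteq> []"
  shows "eqv (rhow (c # v)) (fscale (1 / (real (length v + 1) * real (length v))) (tensor (gen c) (Dw v + DLw v + Gw v)))"
proof -
  have "rhow (c # v) = fscale (1 / (real (length v + 1) * real (length v))) (\<Sum>k<length (c # v). Qw (rotate k (c # v)))"
    unfolding rhow_def by simp
  then show ?thesis using eqv_scale[OF per_word_sum[OF v]] by simp
qed

definition hom :: "nat \<Rightarrow> ncpoly \<Rightarrow> bool" where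
  "hom m p \<longleftrightarrow> (\<forall>z. p z \<noteq> 0 \<longrightarrow> length z = m)"

lemma hom_zero: "hom m 0" by (simp add: hom_def)
lemma hom_zero': "hom m (\<lambda>x. 0)" by (simp add: hom_def)
lemma hom_add: assumes "hom m p" "hom m q" shows "hom m (p + q)"
  unfolding hom_def
proof (intro allI impI)
  fix z assume "(p + q) z \<noteq> 0"
  then have "p z \<noteq> 0 \<or> q z \<noteq> 0" by (auto simp: plus_fun_apply)
  then show "length z = m" using assms by (auto simp: hom_def)
qed
lemma hom_diff: assumes "hom m p" "hom m q" shows "hom m (p - q)"
  unfolding hom_def
proof (intro allI impI)
  fix z assume "(p - q) z \<noteq> 0"
  then have "p z \<noteq> 0 \<or> q z \<noteq> 0" by (auto simp: minus_apply)
  then show "length z = m" using assms by (auto simp: hom_def)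
qed
lemma hom_sum: "(\<And>i. i \<in> S \<Longrightarrow> hom m (f i)) \<Longrightarrow> hom m (sum f S)"
  by (induct S rule: infinite_finite_induct) (auto simp: hom_zero hom_add)
lemma hom_gen: "hom 1 (gen c)" by (simp add: hom_def gen_def)
lemma hom_ncmul: "hom m p \<Longrightarrow> hom k q \<Longrightarrow> hom (m + k) (ncmul p q)"
proof (unfold hom_def, intro allI impI)
  fix z assume p: "\<forall>z. p z \<noteq> 0 \<longrightarrow> length z = m" and q: "\<forall>z. q z \<noteq> 0 \<longrightarrow> length z = k"
    and nz: "ncmul p q z \<noteq> 0"
  have "\<exists>i\<in>{0..length z}. p (take i z) * q (drop i z) \<noteq> 0"
  proof (rule ccontr)
    assume "\<not> ?thesis"
    then have "ncmul p q z = 0" unfolding ncmul_apply by (intro sum.neutral) blast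
    then show False using nz by contradiction
  qed
  then obtain i where i: "i \<in> {0..length z}" "p (take i z) \<noteq> 0" "q (drop i z) \<noteq> 0"
    by auto
  then have "length (take i z) = m" "length (drop i z) = k" using p q by auto
  then show "length z = m + k" using i by auto
qed
lemma hom_lie: "hom m p \<Longrightarrow> hom k q \<Longrightarrow> hom (m + k) (lie_br p q)"
  unfolding lie_br_def using hom_ncmul[of m p k q] hom_ncmul[of k q m p]
  by (simp add: hom_diff add.commute)
lemma hom_adw: "hom k X \<Longrightarrow> hom (length u + k) (adw u X)"
proof (induct u)
  case Nil then show ?case by simp
next
  case (Cons c u)
  have "hom (1 + (length u + k)) (lie_br (gen c) (adw u X))"
    by (rule hom_lie[OF hom_gen Cons.hyps[OF Cons.prems]])
  then show ?case by simp
qed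
lemma hom_adwR: "hom k X \<Longrightarrow> hom (k + length v) (adwR v X)"
proof (induct v arbitrary: k X)
  case Nil then show ?case by simp
next
  case (Cons d v)
  have "hom (k + 1) (lie_br X (gen d))" by (rule hom_lie[OF Cons.prems hom_gen])
  then have "hom (k + 1 + length v) (adwR v (lie_br X (gen d)))" by (rule Cons.hyps)
  then show ?case by simp
qed
lemma hom_Dw: "hom (length w) (Dw w)"
proof (induct w)
  case Nil then show ?case by (simp add: hom_zero hom_zero')
next
  case (Cons c v)
  show ?case
  proof (cases "v = []")
    case True then show ?thesis using hom_gen by simp
  next
    case False
    have "hom (1 + length v) (lie_br (gen c) (Dw v))" by (rule hom_lie[OF hom_gen Cons])
    then show ?thesis using False by simp
  qed
qed
lemma hom_DLw: "hom (length w) (DLw w)"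
proof (cases w)
  case Nil then show ?thesis by (simp add: hom_zero hom_zero')
next
  case (Cons c u)
  have "hom (1 + length u) (adwR u (gen c))" by (rule hom_adwR[OF hom_gen])
  then show ?thesis using Cons by simp
qed
lemma hom_Gw: "hom (length w) (Gw w)"
  unfolding Gw_def
proof (rule hom_sum)
  fix j assume "j \<in> {1..<length w}"
  then have "length w = length (take j w) + length (drop j w)" by auto
  then show "hom (length w) (lie_br (Dw (take j w)) (DLw (drop j w)))"
    using hom_lie[OF hom_Dw hom_DLw] by metis
qed

lemma lin_hom_scale:
  assumes "\<And>v. hom (length v) (S v)"
  shows "lin (\<lambda>v. fscale (h (length v)) (S v)) p = (\<lambda>z. h (length z) * lin S p z)"
proof (rule ext)
  fix z
  have "lin (\<lambda>v. fscale (h (length v)) (S v)) p z = (\<Sum>w\<in>supp p. p w * (h (length w) * S w z))"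
    by (simp add: lin_apply fscale_app)
  also have "\<dots> = (\<Sum>w\<in>supp p. h (length z) * (p w * S w z))"
  proof (rule sum.cong[OF refl])
    fix w
    show "p w * (h (length w) * S w z) = h (length z) * (p w * S w z)"
      using assms[of w] unfolding hom_def by (cases "S w z = 0") auto
  qed
  also have "\<dots> = h (length z) * lin S p z"
    by (simp add: lin_apply sum_distrib_left)
  finally show "lin (\<lambda>v. fscale (h (length v)) (S v)) p z = h (length z) * lin S p z" .
qed

lemma base:
  assumes bL: "b \<in> FreeLie"
  shows "eqv (rho (ncmul (gen c) b)) (tensor (gen c) b)"
proof -
  have bA: "b \<in> Aset" using bL FreeLie_Aset by auto
  let ?h = "\<lambda>m::nat. 1 / (real (m + 1) * real m)"
  let ?S = "\<lambda>v. Dw v + DLw v + Gw v"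
  have "rho (ncmul (gen c) b) = lin (\<lambda>v. rhow (c # v)) b"
    unfolding rho_def gen_delta by (simp add: lin_ncmul bA)
  moreover have "eqv (lin (\<lambda>v. rhow (c # v)) b) (lin (\<lambda>v. fscale (?h (length v)) (tensor (gen c) (?S v))) b)"
    by (rule eqv_lin) (rule per_word, rule FreeLie_supp_nonempty[OF bL])
  moreover have "lin (\<lambda>v. fscale (?h (length v)) (tensor (gen c) (?S v))) b
      = tensor (gen c) (lin (\<lambda>v. fscale (?h (length v)) (?S v)) b)"
    by (simp add: linop_lin[OF linop_tensor_right] linop_scale[OF linop_tensor_right])
  moreover have "lin (\<lambda>v. fscale (?h (length v)) (?S v)) b = b"
  proof -
    have hS: "hom (length v) (?S v)" for v
      by (intro hom_add hom_Dw hom_DLw hom_Gw)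
    have "lin (\<lambda>v. fscale (?h (length v)) (?S v)) b = (\<lambda>z. ?h (length z) * lin ?S b z)"
      by (rule lin_hom_scale[OF hS])
    also have "lin ?S b = Eop b + Eop b + (Eop (Eop b) - Eop b)"
      by (simp add: lin_fadd K1a[OF bL] K1b[OF bL] K2[OF bL])
    finally have e: "lin (\<lambda>v. fscale (?h (length v)) (?S v)) b = (\<lambda>z. ?h (length z) * (Eop b + Eop b + (Eop (Eop b) - Eop b)) z)" .
    show ?thesis
    proof (rule ext)
      fix z
      show "lin (\<lambda>v. fscale (?h (length v)) (?S v)) b z = b z"
      proof (cases "z = []")
        case True then show ?thesis using FreeLie_nil[OF bL] e
          by (simp add: Eop_def plus_fun_apply minus_apply)
      next
        case False
        then have pz: "real (length z) > 0" by simp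
        then have d: "real (length z) + real (length z) * real (length z) \<noteq> 0"
          by (metis add_pos_pos mult_pos_pos less_irrefl)
        have d2: "(real (length z) + 1) * real (length z) \<noteq> 0" using pz by simp
        show ?thesis unfolding e using d d2
          by (simp add: Eop_def plus_fun_apply minus_apply field_simps)
      qed
    qed
  qed
  ultimately show ?thesis by simp
qed



declare plus_fun_apply[simp del] minus_apply[simp del] uminus_apply[simp del]

lemma zero_lam: "(\<lambda>x. 0::real) = 0" by (simp add: fun_eq_iff)

lemma R2: "a \<in> FreeLie \<Longrightarrow> b \<in> FreeLie \<Longrightarrow> eqv (rho (ncmul a b)) (tensor a b)"
proof (induct a arbitrary: b rule: FreeLie_induct)
  case (gen c) then show ?case by (rule base)
next
  case (add a1 a2)
  have A: "a1 \<in> Aset" "a2 \<in> Aset" "b \<in> Aset" using add FreeLie_Aset by auto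
  have "rho (ncmul (a1 + a2) b) = rho (ncmul a1 b) + rho (ncmul a2 b)"
    using A by (simp add: linop_add[OF linop_ncmul_left] rho_add Aset_ncmul)
  moreover have "tensor (a1 + a2) b = tensor a1 b + tensor a2 b"
    by (rule linop_add[OF linop_tensor_left])
  ultimately show ?case using eqv_add[OF add(2)[OF add(5)] add(4)[OF add(5)]] by simp
next
  case (scale a c)
  have "rho (ncmul (fscale c a) b) = fscale c (rho (ncmul a b))"
    by (simp add: linop_scale[OF linop_ncmul_left] rho_scale)
  moreover have "tensor (fscale c a) b = fscale c (tensor a b)"
    by (rule linop_scale[OF linop_tensor_left])
  ultimately show ?case using eqv_scale[OF scale(2)[OF scale(3)]] by simp
next
  case (br a1 a2)
  have L: "a1 \<in> FreeLie" "a2 \<in> FreeLie" "b \<in> FreeLie" using br by auto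
  have A: "a1 \<in> Aset" "a2 \<in> Aset" "b \<in> Aset" using L FreeLie_Aset by auto
  have "ncmul (lie_br a1 a2) b = ncmul a1 (ncmul a2 b) - ncmul a2 (ncmul a1 b)"
    unfolding lie_br_def by (simp add: linop_diff[OF linop_ncmul_left] ncmul_assoc A)
  then have "rho (ncmul (lie_br a1 a2) b) = rho (ncmul a1 (ncmul a2 b)) - rho (ncmul a2 (ncmul a1 b))"
    using A by (simp add: rho_diff Aset_ncmul)
  also have "rho (ncmul a1 (ncmul a2 b)) = rho (ncmul a2 (ncmul b a1))"
    using A by (simp add: rho_comm[of a1 "ncmul a2 b"] ncmul_assoc Aset_ncmul)
  also have "rho (ncmul a2 (ncmul b a1)) - rho (ncmul a2 (ncmul a1 b)) = rho (ncmul a2 (lie_br b a1))"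
    unfolding lie_br_def using A by (simp add: rho_diff Aset_ncmul linop_diff[OF linop_ncmul_right])
  finally have e: "rho (ncmul (lie_br a1 a2) b) = rho (ncmul a2 (lie_br b a1))" .
  have 1: "eqv (rho (ncmul a2 (lie_br b a1))) (tensor a2 (lie_br b a1))"
    using br(4)[of "lie_br b a1"] L FreeLie.br by blast
  have 2: "eqv (tensor a2 (lie_br b a1)) (tensor (lie_br a2 b) a1)"
    by (rule FL_inv) (use L in auto)
  have 3: "eqv (tensor (lie_br a2 b) a1) (tensor a1 (lie_br a2 b))"
    by (rule FL_sym) (use L FreeLie.br in auto)
  have 4: "eqv (tensor a1 (lie_br a2 b)) (tensor (lie_br a1 a2) b)"
    by (rule FL_inv) (use L in auto)
  show ?case unfolding e using eqv_trans[OF eqv_trans[OF eqv_trans[OF 1 2] 3] 4] .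
qed

theorem mainTheorem4:
  assumes "t \<in> LtensL"
    and "mulmap t \<in> commA"
  shows "t \<in> FL_rel"
proof -
  have L: "mulmap t \<in> Aset \<and> eqv (rho (mulmap t)) t"
    using assms(1) unfolding LtensL_def
  proof (induct rule: module.span_induct_alt[OF fmod, consumes 1, case_names base step])
    case base show ?case unfolding zero_lam rho_def linop_zero[OF linop_mulmap] lin_zero
      using Aset_zero eqv_refl by blast
  next
    case (step c x y)
    then obtain a b where x: "x = tensor a b" and ab: "a \<in> FreeLie" "b \<in> FreeLie" by blast
    have abA: "a \<in> Aset" "b \<in> Aset" using ab FreeLie_Aset by auto
    have m: "mulmap (fscale c x + y) = fscale c (ncmul a b) + mulmap y"
      by (simp add: linop_add[OF linop_mulmap] linop_scale[OF linop_mulmap] x mulmap_tensor)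
    have mA: "fscale c (ncmul a b) + mulmap y \<in> Aset"
      using step abA by (intro Aset_add Aset_scale Aset_ncmul) auto
    have "rho (fscale c (ncmul a b) + mulmap y) = fscale c (rho (ncmul a b)) + rho (mulmap y)"
      using step abA by (simp add: rho_add rho_scale Aset_scale Aset_ncmul)
    moreover have "eqv (fscale c (rho (ncmul a b)) + rho (mulmap y)) (fscale c x + y)"
      unfolding x by (rule eqv_add[OF eqv_scale[OF R2[OF ab]]]) (use step in auto)
    ultimately show ?case using m mA by simp
  qed
  have C: "mulmap t \<in> Aset \<and> rho (mulmap t) \<in> FL_rel"
    using assms(2) unfolding commA_def
  proof (induct rule: module.span_induct_alt[OF fmod, consumes 1, case_names base step])
    case base show ?case unfolding zero_lam rho_def lin_zero using Aset_zero FLr_zero by blast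
  next
    case (step c x y)
    then obtain p q where x: "x = lie_br p q" and pq: "p \<in> Aset" "q \<in> Aset" by blast
    have xA: "x \<in> Aset" using x pq by auto
    have "rho (fscale c x + y) = fscale c (rho x) + rho y"
      using step xA by (simp add: rho_add rho_scale Aset_scale)
    also have "rho x = 0" using x pq rho_lie by simp
    finally have "rho (fscale c x + y) = fscale c 0 + rho y" .
    moreover have "fscale c 0 + rho y \<in> FL_rel"
      using step by (intro FLr_add FLr_scale FLr_zero) auto
    ultimately show ?case using step xA by (auto intro: Aset_add Aset_scale)
  qed
  have "t = rho (mulmap t) - (rho (mulmap t) - t)" by simp
  then show ?thesis using FLr_diff[of "rho (mulmap t)" "rho (mulmap t) - t"] L C by simp
qed


end
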